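(* Assume the hypotheses of Theorem 3 (see context), and assume moreover that for every $k\in\mathbb{N}$ there exists $j_k\ge k$ with $(\hat y,u_{j_k})\neq0$. Let $k_n$ be the stopping index of the modified discrepancy principle. Then for every $k\in\mathbb{N}$, $\lim_{n\to\infty}\mathbb{P}(k_n\ge k)=1$; equivalently, there is a deterministic sequence $q_n\to\infty$ with $\mathbb{P}(k_n\ge q_n)\to1$.
   Context: Setting: $K:\mathcal{X}\to\mathcal{Y}$ compact linear between infinite-dimensional real separable Hilbert spaces, dense range, singular value decomposition $(\sigma_j,u_j,v_j)$ with $\sigma_j>0$ nonincreasing to $0$, $Kv_j=\sigma_ju_j$. Hypotheses of Theorem 3: $\hat y=K\hat x$, $Y_1,Y_2,\dots$ i.i.d. $\mathcal{Y}$-valued with $\mathbb{E}Y_1=\hat y$; $q>p-1>0$, $\sigma_j^2\asymp j^{-q}$, $0<v_j:=\mathbb{E}(Y_1-\hat y,u_j)^2\le C_pj^{-p}$, $\mathbb{E}(Y_1-\hat y,u_j)^4\le Cv_j^2$; $0<\varepsilon_1<1$, $0<\varepsilon_2<\min(1,p-1)$; $\hat x\in\{\sum_j\sigma_j^\nu(\xi,v_j)v_j:\|\xi\|\le\rho\}$ with $\nu,\rho>0$. Modified discrepancy principle: $\bar Y_n:=\frac1n\sum_{i\le n}Y_i$, $m_n:=\lfloor n^{1-\varepsilon_1}\rfloor$, $s_{j,n}^2:=\frac1{n-1}\sum_{i=1}^n(Y_i-\bar Y_n,u_j)^2$, $S_n:=\sum_{j'=1}^{m_n}s_{j',n}^2$,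 $d_{1,n}:=\sqrt{\min(S_n/s_{1,n}^2,1/\sigma_1^2)}$, $d_{j,n}:=\sqrt{\min(j^{-(1+\varepsilon_2)}S_n/s_{j,n}^2,\ \sigma_{j-1}^2d_{j-1,n}^2/\sigma_j^2)}$ for $2\le j\le m_n$, $\delta_n':=\sqrt{\frac1n\sum_{j=1}^{m_n}d_{j,n}^2s_{j,n}^2}$, and $k_n:=\min\{k\in\{0,\dots,m_n\}:\sqrt{\sum_{j=k+1}^{m_n}d_{j,n}^2(\bar Y_n,u_j)^2}\le\delta_n'\}$. *)

theory Defs
  imports "HOL-Probability.Probability"
begin

text \<open>The samples Y_1, Y_2, ... of the paper are
  Y 0, Y 1, ... here (Y i \<omega> is the (i+1)-st sample). Singular vectors and values
  are indexed from 1 (u 1, u 2, ...), as in the paper.\<close>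

definition Ybar :: "(nat \<Rightarrow> 'm \<Rightarrow> 'y::real_inner) \<Rightarrow> nat \<Rightarrow> 'm \<Rightarrow> 'y" where
  "Ybar Y n \<omega> = (1 / real n) *\<^sub>R (\<Sum>i<n. Y i \<omega>)"

definition mdp_m :: "real \<Rightarrow> nat \<Rightarrow> nat" where
  "mdp_m eps1 n = nat \<lfloor>real n powr (1 - eps1)\<rfloor>"

definition s2 :: "(nat \<Rightarrow> 'm \<Rightarrow> 'y::real_inner) \<Rightarrow> (nat \<Rightarrow> 'y) \<Rightarrow> nat \<Rightarrow> nat \<Rightarrow> 'm \<Rightarrow> real" where
  "s2 Y u j n \<omega> = (1 / (real n - 1)) * (\<Sum>i<n. (inner (Y i \<omega> - Ybar Y n \<omega>) (u j))\<^sup>2)"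

definition S_tot :: "real \<Rightarrow> (nat \<Rightarrow> 'm \<Rightarrow> 'y::real_inner) \<Rightarrow> (nat \<Rightarrow> 'y) \<Rightarrow> nat \<Rightarrow> 'm \<Rightarrow> real" where
  "S_tot eps1 Y u n \<omega> = (\<Sum>j'=1..mdp_m eps1 n. s2 Y u j' n \<omega>)"

text \<open>Convention: a quotient with vanishing denominator s_{j,n}^2 = 0 is read as
  +infinity, so the minimum is then the other argument.\<close>
fun d2 :: "real \<Rightarrow> real \<Rightarrow> (nat \<Rightarrow> real) \<Rightarrow> (nat \<Rightarrow> 'm \<Rightarrow> 'y::real_inner) \<Rightarrow> (nat \<Rightarrow> 'y)
           \<Rightarrow> nat \<Rightarrow> nat \<Rightarrow> 'm \<Rightarrow> real" where
  "d2 eps1 eps2 \<sigma> Y u 0 n \<omega> = 0"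
| "d2 eps1 eps2 \<sigma> Y u (Suc 0) n \<omega> =
     (if s2 Y u 1 n \<omega> = 0 then 1 / (\<sigma> 1)\<^sup>2
      else min (S_tot eps1 Y u n \<omega> / s2 Y u 1 n \<omega>) (1 / (\<sigma> 1)\<^sup>2))"
| "d2 eps1 eps2 \<sigma> Y u (Suc (Suc k)) n \<omega> =
     (let j = Suc (Suc k);
          prev = (\<sigma> (Suc k))\<^sup>2 * d2 eps1 eps2 \<sigma> Y u (Suc k) n \<omega> / (\<sigma> j)\<^sup>2
      in if s2 Y u j n \<omega> = 0 then prev
         else min (real j powr (-(1 + eps2)) * S_tot eps1 Y u n \<omega> / s2 Y u j n \<omega>) prev)"

definition dd :: "real \<Rightarrow> real \<Rightarrow> (nat \<Rightarrow> real) \<Rightarrow> (nat \<Rightarrow> 'm \<Rightarrow> 'y::real_inner) \<Rightarrow> (nat \<Rightarrow> 'y)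
           \<Rightarrow> nat \<Rightarrow> nat \<Rightarrow> 'm \<Rightarrow> real" where
  "dd eps1 eps2 \<sigma> Y u j n \<omega> = sqrt (d2 eps1 eps2 \<sigma> Y u j n \<omega>)"

definition delta' :: "real \<Rightarrow> real \<Rightarrow> (nat \<Rightarrow> real) \<Rightarrow> (nat \<Rightarrow> 'm \<Rightarrow> 'y::real_inner) \<Rightarrow> (nat \<Rightarrow> 'y)
           \<Rightarrow> nat \<Rightarrow> 'm \<Rightarrow> real" where
  "delta' eps1 eps2 \<sigma> Y u n \<omega> =
     sqrt ((1 / real n) * (\<Sum>j=1..mdp_m eps1 n. (dd eps1 eps2 \<sigma> Y u j n \<omega>)\<^sup>2 * s2 Y u j n \<omega>))"

definition k_stop :: "real \<Rightarrow> real \<Rightarrow> (nat \<Rightarrow> real) \<Rightarrow> (nat \<Rightarrow> 'm \<Rightarrow> 'y::real_inner) \<Rightarrow> (nat \<Rightarrow> 'y)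
           \<Rightarrow> nat \<Rightarrow> 'm \<Rightarrow> nat" where
  "k_stop eps1 eps2 \<sigma> Y u n \<omega> =
     (LEAST k. k \<le> mdp_m eps1 n \<and>
        sqrt (\<Sum>j=k+1..mdp_m eps1 n. (dd eps1 eps2 \<sigma> Y u j n \<omega>)\<^sup>2 * (inner (Ybar Y n \<omega>) (u j))\<^sup>2)
          \<le> delta' eps1 eps2 \<sigma> Y u n \<omega>)"

end

theory Submission
  imports Defs
begin


lemma s2_nonneg: "0 \<le> s2 Y u j n \<omega>"
proof (cases "n \<le> 1")
  case True
  then have "n = 0 \<or> n = 1" by auto
  then show ?thesis unfolding s2_def by auto
next
  case False
  then have "real n - 1 > 0" by auto
  then show ?thesis unfolding s2_def by (intro mult_nonneg_nonneg sum_nonneg) auto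
qed

lemma S_tot_nonneg: "0 \<le> S_tot eps1 Y u n \<omega>"
  unfolding S_tot_def by (intro sum_nonneg s2_nonneg)

lemma S_tot_ge: "1 \<le> j \<Longrightarrow> j \<le> mdp_m eps1 n \<Longrightarrow> s2 Y u j n \<omega> \<le> S_tot eps1 Y u n \<omega>"
  unfolding S_tot_def by (rule member_le_sum) (auto intro: s2_nonneg)

lemma d2_nonneg: "0 \<le> d2 eps1 eps2 \<sigma> Y u j n \<omega>"
proof (induction eps1 eps2 \<sigma> Y u j n \<omega> rule: d2.induct)
  case (2 eps1 eps2 \<sigma> Y u n \<omega>)
  then show ?case using S_tot_nonneg[of eps1 Y u n \<omega>] s2_nonneg[of Y u 1 n \<omega>]
    by (auto simp: Let_def)
next
  case (3 eps1 eps2 \<sigma> Y u k n \<omega>)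
  then show ?case using S_tot_nonneg[of eps1 Y u n \<omega>] s2_nonneg[of Y u "Suc (Suc k)" n \<omega>]
    by (auto simp: Let_def)
qed auto

lemma powr_neg_le1: "1 \<le> x \<Longrightarrow> 0 \<le> a \<Longrightarrow> x powr (-a) \<le> (1::real)"
  by (simp add: powr_minus_divide ge_one_powr_ge_zero)

lemma d2_s2_le: "0 < eps2 \<Longrightarrow> d2 eps1 eps2 \<sigma> Y u j n \<omega> * s2 Y u j n \<omega> \<le> S_tot eps1 Y u n \<omega>"
proof -
  assume eps2pos: "0 < eps2"
  have S0: "0 \<le> S_tot eps1 Y u n \<omega>" by (rule S_tot_nonneg)
  have s0: "0 \<le> s2 Y u j n \<omega>" by (rule s2_nonneg)
  have key: "min a b * s \<le> S" if "0 \<le> s" "0 < s \<Longrightarrow> a * s \<le> S" "0 \<le> S" for a b s S :: real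
  proof (cases "s = 0")
    case True then show ?thesis using that by simp
  next
    case False
    then have "min a b * s \<le> a * s" using that by (intro mult_right_mono) auto
    also have "\<dots> \<le> S" using that False by auto
    finally show ?thesis .
  qed
  show ?thesis
  proof (cases j)
    case 0 then show ?thesis using S0 by simp
  next
    case (Suc k)
    show ?thesis
    proof (cases k)
      case 0
      show ?thesis using Suc 0 s0 S0
        by (auto intro!: key)
    next
      case (Suc k')
      have pw: "real (Suc (Suc k')) powr (-(1 + eps2)) \<le> 1"
        using powr_neg_le1[of "real (Suc (Suc k'))" "1 + eps2"] eps2pos by simp
      have "real (Suc (Suc k')) powr (-(1 + eps2)) * S_tot eps1 Y u n \<omega> / s2 Y u (Suc (Suc k')) n \<omega> * s2 Y u (Suc (Suc k')) n \<omega>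
          \<le> S_tot eps1 Y u n \<omega>" if "0 < s2 Y u (Suc (Suc k')) n \<omega>"
        using that pw S0 by (simp add: mult_left_le_one_le)
      then show ?thesis using \<open>j = Suc k\<close> Suc s0 S0
        by (auto simp: Let_def intro!: key)
    qed
  qed
qed

fun Lb :: "real \<Rightarrow> (nat \<Rightarrow> real) \<Rightarrow> nat \<Rightarrow> real" where
  "Lb e \<sigma> 0 = 0"
| "Lb e \<sigma> (Suc 0) = min 1 (1 / (\<sigma> 1)\<^sup>2)"
| "Lb e \<sigma> (Suc (Suc k)) = min (real (Suc (Suc k)) powr (-(1 + e)))
      ((\<sigma> (Suc k))\<^sup>2 * Lb e \<sigma> (Suc k) / (\<sigma> (Suc (Suc k)))\<^sup>2)"

lemma Lb_pos:
  assumes "\<And>j. 1 \<le> j \<Longrightarrow> \<sigma> j > 0"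
  shows "1 \<le> j \<Longrightarrow> 0 < Lb e \<sigma> j"
proof (induction j)
  case 0 then show ?case by simp
next
  case (Suc k)
  show ?case
  proof (cases k)
    case 0
    have "\<sigma> (Suc 0) > 0" using assms[of 1] by simp
    then show ?thesis using 0 by (simp; linarith)
  next
    case (Suc k')
    have "Lb e \<sigma> (Suc k') > 0" using Suc.IH Suc by simp
    moreover have "\<sigma> (Suc k') > 0" "\<sigma> (Suc (Suc k')) > 0" using assms[of "Suc k'"] assms[of "Suc (Suc k')"] by auto
    ultimately show ?thesis using Suc by simp
  qed
qed

lemma d2_ge_Lb:
  assumes sp: "\<And>j. 1 \<le> j \<Longrightarrow> \<sigma> j > 0"
  shows "1 \<le> j \<Longrightarrow> j \<le> mdp_m eps1 n \<Longrightarrow> Lb eps2 \<sigma> j \<le> d2 eps1 eps2 \<sigma> Y u j n \<omega>"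
proof (induction j)
  case 0 then show ?case by simp
next
  case (Suc k)
  let ?S = "S_tot eps1 Y u n \<omega>"
  have ratio: "1 \<le> ?S / s2 Y u (Suc k) n \<omega>" if "s2 Y u (Suc k) n \<omega> \<noteq> 0"
  proof -
    have "s2 Y u (Suc k) n \<omega> \<le> ?S" using Suc.prems by (intro S_tot_ge) auto
    moreover have "0 < s2 Y u (Suc k) n \<omega>" using that s2_nonneg[of Y u "Suc k" n \<omega>] by auto
    ultimately show ?thesis by simp
  qed
  show ?case
  proof (cases k)
    case 0
    then show ?thesis using ratio by auto
  next
    case (Suc k')
    have IH: "Lb eps2 \<sigma> (Suc k') \<le> d2 eps1 eps2 \<sigma> Y u (Suc k') n \<omega>"
      using Suc.IH Suc.prems \<open>k = Suc k'\<close> by auto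
    have prev: "(\<sigma> (Suc k'))\<^sup>2 * Lb eps2 \<sigma> (Suc k') / (\<sigma> (Suc (Suc k')))\<^sup>2
       \<le> (\<sigma> (Suc k'))\<^sup>2 * d2 eps1 eps2 \<sigma> Y u (Suc k') n \<omega> / (\<sigma> (Suc (Suc k')))\<^sup>2"
      using IH by (intro divide_right_mono mult_left_mono) auto
    have q: "real (Suc (Suc k')) powr (-(1 + eps2)) \<le>
        real (Suc (Suc k')) powr (-(1 + eps2)) * ?S / s2 Y u (Suc (Suc k')) n \<omega>"
      if "s2 Y u (Suc (Suc k')) n \<omega> \<noteq> 0"
    proof -
      have r: "1 \<le> ?S / s2 Y u (Suc (Suc k')) n \<omega>" using ratio[unfolded \<open>k = Suc k'\<close>, OF that] .
      have "real (Suc (Suc k')) powr (-(1 + eps2)) * 1 \<le> real (Suc (Suc k')) powr (-(1 + eps2)) * (?S / s2 Y u (Suc (Suc k')) n \<omega>)"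
        by (rule mult_left_mono[OF r]) simp
      then show ?thesis by simp
    qed
    define x where "x = real (Suc (Suc k')) powr (-(1 + eps2))"
    define A where "A = (\<sigma> (Suc k'))\<^sup>2 * Lb eps2 \<sigma> (Suc k') / (\<sigma> (Suc (Suc k')))\<^sup>2"
    define P where "P = (\<sigma> (Suc k'))\<^sup>2 * d2 eps1 eps2 \<sigma> Y u (Suc k') n \<omega> / (\<sigma> (Suc (Suc k')))\<^sup>2"
    define Q where "Q = real (Suc (Suc k')) powr (-(1 + eps2)) * ?S / s2 Y u (Suc (Suc k')) n \<omega>"
    have L: "Lb eps2 \<sigma> (Suc (Suc k')) = min x A" unfolding x_def A_def by simp
    have D: "d2 eps1 eps2 \<sigma> Y u (Suc (Suc k')) n \<omega> = (if s2 Y u (Suc (Suc k')) n \<omega> = 0 then P else min Q P)"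
      unfolding P_def Q_def by (simp add: Let_def)
    have AP: "A \<le> P" using prev unfolding A_def P_def .
    have xQ: "s2 Y u (Suc (Suc k')) n \<omega> \<noteq> 0 \<Longrightarrow> x \<le> Q" using q unfolding x_def Q_def .
    show ?thesis unfolding \<open>k = Suc k'\<close> L D
      using AP xQ by (auto simp: min.coboundedI2 intro: min.mono)
  qed
qed

lemma delta'_sq_le:
  assumes "0 < eps2"
  shows "(delta' eps1 eps2 \<sigma> Y u n \<omega>)\<^sup>2 \<le> real (mdp_m eps1 n) * S_tot eps1 Y u n \<omega> / real n"
proof -
  let ?m = "mdp_m eps1 n"
  have sq: "(dd eps1 eps2 \<sigma> Y u j n \<omega>)\<^sup>2 = d2 eps1 eps2 \<sigma> Y u j n \<omega>" for j
    unfolding dd_def using d2_nonneg by simp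
  have nn: "0 \<le> (1 / real n) * (\<Sum>j=1..?m. (dd eps1 eps2 \<sigma> Y u j n \<omega>)\<^sup>2 * s2 Y u j n \<omega>)"
    by (intro mult_nonneg_nonneg sum_nonneg) (auto simp: s2_nonneg)
  have "(\<Sum>j=1..?m. (dd eps1 eps2 \<sigma> Y u j n \<omega>)\<^sup>2 * s2 Y u j n \<omega>) \<le> (\<Sum>j=1..?m. S_tot eps1 Y u n \<omega>)"
    unfolding sq by (intro sum_mono d2_s2_le assms)
  also have "\<dots> = real ?m * S_tot eps1 Y u n \<omega>" by simp
  finally have le: "(\<Sum>j=1..?m. (dd eps1 eps2 \<sigma> Y u j n \<omega>)\<^sup>2 * s2 Y u j n \<omega>) \<le> real ?m * S_tot eps1 Y u n \<omega>" .
  have "(delta' eps1 eps2 \<sigma> Y u n \<omega>)\<^sup>2 = (1 / real n) * (\<Sum>j=1..?m. (dd eps1 eps2 \<sigma> Y u j n \<omega>)\<^sup>2 * s2 Y u j n \<omega>)"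
    unfolding delta'_def using nn by simp
  also have "\<dots> \<le> (1 / real n) * (real ?m * S_tot eps1 Y u n \<omega>)"
    by (intro mult_left_mono le) auto
  finally show ?thesis by simp
qed

lemma inner_Ybar: "inner (Ybar Y n \<omega>) w = (1 / real n) * (\<Sum>i<n. inner (Y i \<omega>) w)"
  unfolding Ybar_def by (simp add: inner_sum_left)

lemma inner_Ybar_c: "1 \<le> n \<Longrightarrow>
  inner (Ybar Y n \<omega>) w = inner c w + (1 / real n) * (\<Sum>i<n. inner (Y i \<omega> - c) w)"
  unfolding inner_Ybar by (simp add: inner_diff_left sum_subtractf field_simps)

lemma sumsq_dev_le:
  fixes a :: "nat \<Rightarrow> real"
  assumes "1 \<le> n" "b = (1 / real n) * (\<Sum>i<n. a i)"
  shows "(\<Sum>i<n. (a i - b)\<^sup>2) \<le> (\<Sum>i<n. (a i)\<^sup>2)"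
proof -
  have sb: "(\<Sum>i<n. a i) = real n * b" using assms by simp
  have "(\<Sum>i<n. (a i - b)\<^sup>2) = (\<Sum>i<n. (a i)\<^sup>2) - 2 * b * (\<Sum>i<n. a i) + real n * b\<^sup>2"
  proof -
    have "(\<Sum>i<n. (a i - b)\<^sup>2) = (\<Sum>i<n. (a i)\<^sup>2 - 2 * b * a i + b\<^sup>2)"
      by (intro sum.cong refl) (simp add: power2_diff algebra_simps)
    also have "\<dots> = (\<Sum>i<n. (a i)\<^sup>2) - 2 * b * (\<Sum>i<n. a i) + real n * b\<^sup>2"
      by (simp add: sum.distrib sum_subtractf sum_distrib_left)
    finally show ?thesis .
  qed
  also have "\<dots> = (\<Sum>i<n. (a i)\<^sup>2) - real n * b\<^sup>2" unfolding sb by (simp add: power2_eq_square)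
  also have "\<dots> \<le> (\<Sum>i<n. (a i)\<^sup>2)" by simp
  finally show ?thesis .
qed

lemma s2_le:
  assumes "2 \<le> n"
  shows "s2 Y u j n \<omega> \<le> (1 / (real n - 1)) * (\<Sum>i<n. (inner (Y i \<omega> - c) (u j))\<^sup>2)"
proof -
  let ?a = "\<lambda>i. inner (Y i \<omega> - c) (u j)"
  let ?b = "inner (Ybar Y n \<omega> - c) (u j)"
  have b: "?b = (1 / real n) * (\<Sum>i<n. ?a i)"
    using inner_Ybar_c[of n Y \<omega> "u j" c] assms by (simp add: inner_diff_left)
  have e: "inner (Y i \<omega> - Ybar Y n \<omega>) (u j) = ?a i - ?b" for i
    by (simp add: inner_diff_left)
  have "(\<Sum>i<n. (inner (Y i \<omega> - Ybar Y n \<omega>) (u j))\<^sup>2) \<le> (\<Sum>i<n. (?a i)\<^sup>2)"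
    unfolding e using assms b by (intro sumsq_dev_le) auto
  moreover have "real n - 1 > 0" using assms by simp
  ultimately show ?thesis unfolding s2_def by (intro mult_left_mono) auto
qed

lemma k_stop_ge_iff:
  "k \<le> k_stop eps1 eps2 \<sigma> Y u n \<omega> \<longleftrightarrow>
   (\<forall>k'<k. \<not> (k' \<le> mdp_m eps1 n \<and>
        sqrt (\<Sum>j=k'+1..mdp_m eps1 n. (dd eps1 eps2 \<sigma> Y u j n \<omega>)\<^sup>2 * (inner (Ybar Y n \<omega>) (u j))\<^sup>2)
          \<le> delta' eps1 eps2 \<sigma> Y u n \<omega>))"
  (is "_ \<longleftrightarrow> (\<forall>k'<k. \<not> ?P k')")
proof -
  have d0: "0 \<le> delta' eps1 eps2 \<sigma> Y u n \<omega>" unfolding delta'_def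
    by (intro real_sqrt_ge_zero mult_nonneg_nonneg sum_nonneg) (auto simp: s2_nonneg)
  have Pm: "?P (mdp_m eps1 n)" using d0 by simp
  have eq: "k_stop eps1 eps2 \<sigma> Y u n \<omega> = (LEAST k. ?P k)" unfolding k_stop_def ..
  show ?thesis
  proof
    assume a: "k \<le> k_stop eps1 eps2 \<sigma> Y u n \<omega>"
    show "\<forall>k'<k. \<not> ?P k'"
    proof (intro allI impI notI)
      fix k' assume k': "k' < k" "?P k'"
      then have "(LEAST k. ?P k) \<le> k'" by (intro Least_le)
      then show False using a k'(1) unfolding eq by simp
    qed
  next
    assume a: "\<forall>k'<k. \<not> ?P k'"
    show "k \<le> k_stop eps1 eps2 \<sigma> Y u n \<omega>"
    proof (rule ccontr)
      assume "\<not> ?thesis"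
      then have "(LEAST k. ?P k) < k" unfolding eq by simp
      moreover have "?P (LEAST k. ?P k)" by (rule LeastI[of ?P, OF Pm])
      ultimately show False using a by blast
    qed
  qed
qed



context prob_space
begin

lemma sum_sq_integral:
  fixes Z :: "nat \<Rightarrow> 'a \<Rightarrow> real"
  assumes indep: "indep_vars (\<lambda>_. borel) Z UNIV"
    and meas: "\<And>i. Z i \<in> borel_measurable M"
    and sq: "\<And>i. integrable M (\<lambda>\<omega>. (Z i \<omega>)\<^sup>2)"
    and mean: "\<And>i. expectation (Z i) = 0"
    and var: "\<And>i. expectation (\<lambda>\<omega>. (Z i \<omega>)\<^sup>2) = V"
  shows "integrable M (\<lambda>\<omega>. (\<Sum>i<n. Z i \<omega>)\<^sup>2) \<and> expectation (\<lambda>\<omega>. (\<Sum>i<n. Z i \<omega>)\<^sup>2) = real n * V"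
proof (induction n)
  case 0 show ?case by simp
next
  case (Suc n)
  let ?S = "\<lambda>\<omega>. \<Sum>i<n. Z i \<omega>"
  have intZ: "integrable M (Z i)" for i using square_integrable_imp_integrable[OF meas sq] .
  have intS: "integrable M ?S" using intZ by auto
  have ind: "indep_var borel (Z n) borel ?S"
    by (rule indep_vars_sum) (auto intro: indep_vars_subset[OF indep])
  have intSZ: "integrable M (\<lambda>\<omega>. Z n \<omega> * ?S \<omega>)" using indep_var_integrable[OF ind intZ intS] .
  have ESZ: "expectation (\<lambda>\<omega>. Z n \<omega> * ?S \<omega>) = 0"
    using indep_var_lebesgue_integral[OF ind intZ intS] mean by simp
  have eq: "(\<lambda>\<omega>. (\<Sum>i<Suc n. Z i \<omega>)\<^sup>2) = (\<lambda>\<omega>. ((?S \<omega>)\<^sup>2 + 2 * (Z n \<omega> * ?S \<omega>)) + (Z n \<omega>)\<^sup>2)"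
    by (auto simp: power2_sum algebra_simps)
  have i1: "integrable M (\<lambda>\<omega>. (?S \<omega>)\<^sup>2 + 2 * (Z n \<omega> * ?S \<omega>))"
    using Suc.IH intSZ by auto
  have "expectation (\<lambda>\<omega>. ((?S \<omega>)\<^sup>2 + 2 * (Z n \<omega> * ?S \<omega>)) + (Z n \<omega>)\<^sup>2)
      = expectation (\<lambda>\<omega>. (?S \<omega>)\<^sup>2 + 2 * (Z n \<omega> * ?S \<omega>)) + expectation (\<lambda>\<omega>. (Z n \<omega>)\<^sup>2)"
    by (rule Bochner_Integration.integral_add[OF i1 sq])
  also have "expectation (\<lambda>\<omega>. (?S \<omega>)\<^sup>2 + 2 * (Z n \<omega> * ?S \<omega>)) = 
      expectation (\<lambda>\<omega>. (?S \<omega>)\<^sup>2) + expectation (\<lambda>\<omega>. 2 * (Z n \<omega> * ?S \<omega>))"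
    using Suc.IH intSZ by (intro Bochner_Integration.integral_add) auto
  finally have "expectation (\<lambda>\<omega>. (\<Sum>i<Suc n. Z i \<omega>)\<^sup>2) = real (Suc n) * V"
    unfolding eq using Suc.IH ESZ var[of n] by (simp add: algebra_simps)
  moreover have "integrable M (\<lambda>\<omega>. (\<Sum>i<Suc n. Z i \<omega>)\<^sup>2)"
    unfolding eq using i1 sq[of n] by auto
  ultimately show ?case by simp
qed

lemma cheb_sum:
  fixes Z :: "nat \<Rightarrow> 'a \<Rightarrow> real"
  assumes indep: "indep_vars (\<lambda>_. borel) Z UNIV"
    and meas: "\<And>i. Z i \<in> borel_measurable M"
    and sq: "\<And>i. integrable M (\<lambda>\<omega>. (Z i \<omega>)\<^sup>2)"
    and mean: "\<And>i. expectation (Z i) = 0"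
    and var: "\<And>i. expectation (\<lambda>\<omega>. (Z i \<omega>)\<^sup>2) = V"
    and n: "0 < n" and t: "0 < t"
  shows "measure M {\<omega>\<in>space M. real n * t \<le> \<bar>\<Sum>i<n. Z i \<omega>\<bar>} \<le> V / (real n * t\<^sup>2)"
proof -
  note S = sum_sq_integral[OF assms(1-5), of n]
  have "measure M {\<omega>\<in>space M. real n * t \<le> \<bar>\<Sum>i<n. Z i \<omega>\<bar>}
      \<le> expectation (\<lambda>\<omega>. (\<Sum>i<n. Z i \<omega>)^2) / (real n * t)\<^sup>2"
    using S n t meas by (intro second_moment_method) auto
  also have "\<dots> = V / (real n * t\<^sup>2)" using S n by (simp add: power2_eq_square)
  finally show ?thesis .
qed

end

lemma ident_transfer:
  fixes g :: "'y::{real_inner,polish_space} \<Rightarrow> real"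
  assumes X: "X \<in> borel_measurable M" and X': "X' \<in> borel_measurable M"
    and d: "distr M borel X = distr M borel X'" and g: "g \<in> borel_measurable borel"
  shows "integral\<^sup>L M (\<lambda>\<omega>. g (X \<omega>)) = integral\<^sup>L M (\<lambda>\<omega>. g (X' \<omega>))"
    and "integrable M (\<lambda>\<omega>. g (X \<omega>)) \<longleftrightarrow> integrable M (\<lambda>\<omega>. g (X' \<omega>))"
proof -
  show "integral\<^sup>L M (\<lambda>\<omega>. g (X \<omega>)) = integral\<^sup>L M (\<lambda>\<omega>. g (X' \<omega>))"
    using integral_distr[OF X g] integral_distr[OF X' g] d by simp
  show "integrable M (\<lambda>\<omega>. g (X \<omega>)) \<longleftrightarrow> integrable M (\<lambda>\<omega>. g (X' \<omega>))"
    using integrable_distr_eq[OF X g] integrable_distr_eq[OF X' g] d by simp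
qed

lemma diag_seq:
  fixes g :: "nat \<Rightarrow> nat \<Rightarrow> real"
  assumes lim: "\<And>k. (\<lambda>n. g k n) \<longlonglongrightarrow> 1" and le1: "\<And>k n. g k n \<le> 1"
  shows "\<exists>qn::nat\<Rightarrow>nat. filterlim qn at_top sequentially \<and> (\<lambda>n. g (qn n) n) \<longlonglongrightarrow> 1"
proof -
  have "\<exists>N. \<forall>n\<ge>N. g k n > 1 - 1 / real (Suc k)" for k
  proof -
    have "eventually (\<lambda>n. dist (g k n) 1 < 1 / real (Suc k)) sequentially"
      using lim[of k] by (intro tendstoD) auto
    then obtain N where "\<forall>n\<ge>N. dist (g k n) 1 < 1 / real (Suc k)" unfolding eventually_sequentially by blast
    then have "\<forall>n\<ge>N. 1 - 1 / real (Suc k) < g k n"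
      by (auto simp: dist_real_def abs_diff_less_iff)
    then show ?thesis by blast
  qed
  then obtain N where N: "\<And>k n. n \<ge> N k \<Longrightarrow> g k n > 1 - 1 / real (Suc k)" by metis
  define Q where "Q n = {k. k \<le> n \<and> (\<forall>i\<le>k. N i \<le> n)}" for n
  define qn where "qn n = Max (insert 0 (Q n))" for n
  have finQ: "finite (Q n)" for n unfolding Q_def by auto
  have qn_ge: "K \<le> qn n" if "n \<ge> K" "\<forall>i\<le>K. N i \<le> n" for K n
  proof -
    have "K \<in> Q n" using that unfolding Q_def by auto
    then show ?thesis unfolding qn_def using finQ by (intro Max_ge) auto
  qed
  have qn_in: "qn n \<in> Q n" if "N 0 \<le> n" for n
  proof -
    have "0 \<in> Q n" using that unfolding Q_def by auto
    then have "insert 0 (Q n) = Q n" by auto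
    then show ?thesis unfolding qn_def using finQ \<open>0 \<in> Q n\<close>
      by (metis Max_in empty_iff)
  qed
  have lim_q: "filterlim qn at_top sequentially"
    unfolding filterlim_at_top eventually_sequentially
  proof (intro allI exI allI impI)
    fix K n assume "max K (Max (N ` {..K})) \<le> n"
    then have "n \<ge> K" "\<forall>i\<le>K. N i \<le> n"
      by (auto intro: order_trans[OF Max_ge])
    then show "K \<le> qn n" by (rule qn_ge)
  qed
  have "(\<lambda>n. 1 / real (Suc (qn n))) \<longlonglongrightarrow> 0"
  proof -
    have "filterlim (\<lambda>n. real (Suc (qn n))) at_top sequentially"
      by (rule filterlim_compose[OF filterlim_real_sequentially]) (rule filterlim_compose[OF filterlim_Suc lim_q])
    then show ?thesis by (intro tendsto_divide_0[OF tendsto_const]) (rule filterlim_at_top_imp_at_infinity)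
  qed
  then have l1: "(\<lambda>n. 1 - 1 / real (Suc (qn n))) \<longlonglongrightarrow> 1"
    using tendsto_diff[OF tendsto_const[of 1]] by fastforce
  have ev: "eventually (\<lambda>n. 1 - 1 / real (Suc (qn n)) \<le> g (qn n) n) sequentially"
    unfolding eventually_sequentially
  proof (intro exI allI impI)
    fix n assume "N 0 \<le> n"
    then have "qn n \<in> Q n" by (rule qn_in)
    then have "N (qn n) \<le> n" unfolding Q_def by auto
    then show "1 - 1 / real (Suc (qn n)) \<le> g (qn n) n" using N by (simp add: less_imp_le)
  qed
  have "(\<lambda>n. g (qn n) n) \<longlonglongrightarrow> 1"
    by (rule tendsto_sandwich[OF ev _ l1 tendsto_const]) (simp add: le1)
  then show ?thesis using lim_q by blast
qed




lemma Ybar_meas[measurable]: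
  fixes Y :: "nat \<Rightarrow> 'm \<Rightarrow> 'y::{real_inner,polish_space}"
  assumes [measurable]: "\<And>i. Y i \<in> borel_measurable M"
  shows "(\<lambda>\<omega>. Ybar Y n \<omega>) \<in> borel_measurable M"
  unfolding Ybar_def by measurable

lemma s2_meas[measurable]:
  fixes Y :: "nat \<Rightarrow> 'm \<Rightarrow> 'y::{real_inner,polish_space}"
  assumes [measurable]: "\<And>i. Y i \<in> borel_measurable M"
  shows "(\<lambda>\<omega>. s2 Y u j n \<omega>) \<in> borel_measurable M"
  unfolding s2_def by measurable

lemma S_tot_meas[measurable]:
  fixes Y :: "nat \<Rightarrow> 'm \<Rightarrow> 'y::{real_inner,polish_space}"
  assumes [measurable]: "\<And>i. Y i \<in> borel_measurable M"
  shows "(\<lambda>\<omega>. S_tot eps1 Y u n \<omega>) \<in> borel_measurable M"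
  unfolding S_tot_def by measurable

lemma d2_meas[measurable]:
  fixes Y :: "nat \<Rightarrow> 'm \<Rightarrow> 'y::{real_inner,polish_space}"
  assumes [measurable]: "\<And>i. Y i \<in> borel_measurable M"
  shows "(\<lambda>\<omega>. d2 eps1 eps2 \<sigma> Y u j n \<omega>) \<in> borel_measurable M"
proof (induction j)
  case 0 then show ?case by simp
next
  case (Suc k)
  then show ?case
  proof (cases k)
    case 0 then show ?thesis by (simp; measurable)
  next
    case (Suc k')
    then show ?thesis using Suc.IH by (simp add: Let_def; measurable)
  qed
qed

lemma delta'_meas[measurable]:
  fixes Y :: "nat \<Rightarrow> 'm \<Rightarrow> 'y::{real_inner,polish_space}"
  assumes [measurable]: "\<And>i. Y i \<in> borel_measurable M"
  shows "(\<lambda>\<omega>. delta' eps1 eps2 \<sigma> Y u n \<omega>) \<in> borel_measurable M"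
  unfolding delta'_def dd_def by measurable

lemma k_stop_set_meas:
  fixes Y :: "nat \<Rightarrow> 'm \<Rightarrow> 'y::{real_inner,polish_space}"
  assumes [measurable]: "\<And>i. Y i \<in> borel_measurable M"
  shows "{\<omega> \<in> space M. k \<le> k_stop eps1 eps2 \<sigma> Y u n \<omega>} \<in> sets M"
  unfolding k_stop_ge_iff dd_def by measurable


theorem mainTheorem7:
  fixes K :: "'x::{real_inner, polish_space} \<Rightarrow> 'y::{real_inner, polish_space}"
    and \<sigma> :: "nat \<Rightarrow> real" and u :: "nat \<Rightarrow> 'y" and v :: "nat \<Rightarrow> 'x"
    and M :: "'m measure" and Y :: "nat \<Rightarrow> 'm \<Rightarrow> 'y"
    and xhat :: 'x and yhat :: 'y
    and p q C_p C eps1 eps2 \<nu> \<rho> :: real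
  assumes K_lin: "bounded_linear K"
    and K_compact: "compact (closure (K ` cball 0 1))"
    and K_dense: "closure (range K) = UNIV"
    and u_on: "\<And>i j. 1 \<le> i \<Longrightarrow> 1 \<le> j \<Longrightarrow> inner (u i) (u j) = (if i = j then 1 else 0)"
    and v_on: "\<And>i j. 1 \<le> i \<Longrightarrow> 1 \<le> j \<Longrightarrow> inner (v i) (v j) = (if i = j then 1 else 0)"
    and sigma_pos: "\<And>j. 1 \<le> j \<Longrightarrow> \<sigma> j > 0"
    and sigma_mono: "\<And>j. 1 \<le> j \<Longrightarrow> \<sigma> (Suc j) \<le> \<sigma> j"
    and sigma_lim: "\<sigma> \<longlonglongrightarrow> 0"
    and Kv: "\<And>j. 1 \<le> j \<Longrightarrow> K (v j) = \<sigma> j *\<^sub>R u j"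
    and svd: "\<And>x. ((\<lambda>j. (\<sigma> j * inner x (v j)) *\<^sub>R u j) has_sum K x) {1..}"
    and P: "prob_space M"
    and Y_meas: "\<And>i. Y i \<in> borel_measurable M"
    and Y_indep: "prob_space.indep_vars M (\<lambda>_. borel) Y UNIV"
    and Y_ident: "\<And>i. distr M borel (Y i) = distr M borel (Y 0)"
    and Y_int: "integrable M (Y 0)"
    and Y_mean: "prob_space.expectation M (Y 0) = yhat"
    and yhat_def: "yhat = K xhat"
    and pq: "q > p - 1" "p - 1 > 0"
    and sigma_rate: "\<exists>c1 c2. c1 > 0 \<and> c2 > 0 \<and> (\<forall>j\<ge>1. c1 * real j powr (-q) \<le> (\<sigma> j)\<^sup>2
                       \<and> (\<sigma> j)\<^sup>2 \<le> c2 * real j powr (-q))"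
    and mom4_int: "\<And>j. 1 \<le> j \<Longrightarrow> integrable M (\<lambda>\<omega>. (inner (Y 0 \<omega> - yhat) (u j)) ^ 4)"
    and var_pos: "\<And>j. 1 \<le> j \<Longrightarrow> 0 < prob_space.expectation M (\<lambda>\<omega>. (inner (Y 0 \<omega> - yhat) (u j))\<^sup>2)"
    and var_bound: "\<And>j. 1 \<le> j \<Longrightarrow>
          prob_space.expectation M (\<lambda>\<omega>. (inner (Y 0 \<omega> - yhat) (u j))\<^sup>2) \<le> C_p * real j powr (-p)"
    and mom4: "\<And>j. 1 \<le> j \<Longrightarrow>
          prob_space.expectation M (\<lambda>\<omega>. (inner (Y 0 \<omega> - yhat) (u j)) ^ 4)
            \<le> C * (prob_space.expectation M (\<lambda>\<omega>. (inner (Y 0 \<omega> - yhat) (u j))\<^sup>2))\<^sup>2"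
    and eps1: "0 < eps1" "eps1 < 1"
    and eps2: "0 < eps2" "eps2 < min 1 (p - 1)"
    and nu_rho: "\<nu> > 0" "\<rho> > 0"
    and source: "\<exists>\<xi>. norm \<xi> \<le> \<rho> \<and>
          ((\<lambda>j. (\<sigma> j powr \<nu> * inner \<xi> (v j)) *\<^sub>R v j) has_sum xhat) {1..}"
    and nonvanish: "\<And>k. \<exists>j\<ge>k. inner yhat (u j) \<noteq> 0"
  shows "(\<forall>k. (\<lambda>n. measure M {\<omega> \<in> space M. k \<le> k_stop eps1 eps2 \<sigma> Y u n \<omega>}) \<longlonglongrightarrow> 1)
       \<and> (\<exists>qn :: nat \<Rightarrow> nat. filterlim qn at_top sequentially \<and>
           (\<lambda>n. measure M {\<omega> \<in> space M. qn n \<le> k_stop eps1 eps2 \<sigma> Y u n \<omega>}) \<longlonglongrightarrow> 1)"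
proof -
  interpret prob_space M by (rule P)
  note Y_meas[measurable]
  define v where "v j = expectation (\<lambda>\<omega>. (inner (Y 0 \<omega> - yhat) (u j))\<^sup>2)" for j
  have gmeas: "(\<lambda>y. (inner (y - yhat) (u j))\<^sup>2) \<in> borel_measurable borel" for j
    by measurable
  have EY: "expectation (\<lambda>\<omega>. (inner (Y i \<omega> - yhat) (u j))\<^sup>2) = v j" for i j
    unfolding v_def by (rule ident_transfer(1)[OF Y_meas Y_meas Y_ident gmeas])
  have intY: "integrable M (\<lambda>\<omega>. (inner (Y i \<omega> - yhat) (u j))\<^sup>2)" if "1 \<le> j" for i j
  proof -
    have "integrable M (\<lambda>\<omega>. (inner (Y 0 \<omega> - yhat) (u j))\<^sup>2)"
      using var_pos[OF that] not_integrable_integral_eq by force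
    then show ?thesis using ident_transfer(2)[OF Y_meas[of i] Y_meas[of 0] Y_ident[of i] gmeas[of j]] by blast
  qed
  have vpos: "0 < v j" if "1 \<le> j" for j using var_pos[OF that] unfolding v_def .
  have vbd: "v j \<le> C_p * real j powr (-p)" if "1 \<le> j" for j using var_bound[OF that] unfolding v_def .
  have Cp: "0 \<le> C_p" using vpos[of 1] vbd[of 1] by simp
  define Zp where "Zp = suminf (\<lambda>j::nat. real j powr (-p))"
  have summ: "summable (\<lambda>j::nat. real j powr (-p))"
    using summable_real_powr_iff[of "-p"] pq by simp
  have sumv: "(\<Sum>j=1..m. v j) \<le> C_p * Zp" for m
  proof -
    have "(\<Sum>j=1..m. v j) \<le> (\<Sum>j=1..m. C_p * real j powr (-p))"
      by (intro sum_mono vbd) auto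
    also have "\<dots> = C_p * (\<Sum>j=1..m. real j powr (-p))" by (simp add: sum_distrib_left)
    also have "\<dots> \<le> C_p * Zp" unfolding Zp_def
      by (intro mult_left_mono Cp sum_le_suminf summ) auto
    finally show ?thesis .
  qed
  have mle: "real (mdp_m eps1 n) \<le> real n powr (1 - eps1)" for n
  proof -
    have "0 \<le> \<lfloor>real n powr (1 - eps1)\<rfloor>" by simp
    then show ?thesis unfolding mdp_m_def by (simp add: of_nat_nat)
  qed
  have mgt: "real n powr (1 - eps1) - 1 < real (mdp_m eps1 n)" for n
  proof -
    have "0 \<le> \<lfloor>real n powr (1 - eps1)\<rfloor>" by simp
    then show ?thesis unfolding mdp_m_def by (simp add: of_nat_nat)
  qed
  have powlim: "filterlim (\<lambda>n. real n powr (1 - eps1)) at_top sequentially"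
    using eps1 by (intro filterlim_compose[OF real_powr_at_top filterlim_real_sequentially]) simp
  have m_ev: "eventually (\<lambda>n. j \<le> mdp_m eps1 n) sequentially" for j
  proof -
    have "eventually (\<lambda>n. real j + 1 \<le> real n powr (1 - eps1)) sequentially"
      using powlim unfolding filterlim_at_top by blast
    then show ?thesis
    proof (rule eventually_mono)
      fix n assume "real j + 1 \<le> real n powr (1 - eps1)"
      then have "real j < real (mdp_m eps1 n)" using mgt[of n] by linarith
      then show "j \<le> mdp_m eps1 n" by simp
    qed
  qed
  have mn_lim: "(\<lambda>n. real (mdp_m eps1 n) / real n) \<longlonglongrightarrow> 0"
  proof (rule tendsto_sandwich[of "\<lambda>_. 0" _ _ "\<lambda>n. real n powr (-eps1)"])
    show "eventually (\<lambda>n. 0 \<le> real (mdp_m eps1 n) / real n) sequentially" by simp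
    show "eventually (\<lambda>n. real (mdp_m eps1 n) / real n \<le> real n powr (-eps1)) sequentially"
      using eventually_gt_at_top[of 0]
    proof (rule eventually_mono)
      fix n :: nat assume "0 < n"
      then have "real n powr (-eps1) = real n powr (1 - eps1) / real n"
        using powr_diff[of "real n" "1 - eps1" 1] by simp
      then show "real (mdp_m eps1 n) / real n \<le> real n powr (-eps1)"
        using mle[of n] \<open>0 < n\<close> by (simp add: divide_right_mono)
    qed
    show "(\<lambda>n. real n powr (-eps1)) \<longlonglongrightarrow> 0"
      using eps1 by (intro tendsto_neg_powr filterlim_real_sequentially) simp
  qed simp
  have part1: "\<forall>k. (\<lambda>n. measure M {\<omega> \<in> space M. k \<le> k_stop eps1 eps2 \<sigma> Y u n \<omega>}) \<longlonglongrightarrow> 1"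
  proof
    fix k
    show "(\<lambda>n. measure M {\<omega> \<in> space M. k \<le> k_stop eps1 eps2 \<sigma> Y u n \<omega>}) \<longlonglongrightarrow> 1"
    proof -
    obtain j0 where j0: "max k 1 \<le> j0" "inner yhat (u j0) \<noteq> 0" using nonvanish by blast
    define a where "a = inner yhat (u j0)"
    have a0: "a \<noteq> 0" using j0 unfolding a_def by simp
    define L0 where "L0 = Lb eps2 \<sigma> j0"
    have L0pos: "0 < L0" unfolding L0_def using j0 by (intro Lb_pos sigma_pos) auto
    define Z where "Z i \<omega> = inner (Y i \<omega> - yhat) (u j0)" for i \<omega>
    have Zmeas[measurable]: "Z i \<in> borel_measurable M" for i unfolding Z_def by measurable
    have Zindep: "indep_vars (\<lambda>_. borel) Z UNIV"
    proof -
      have "indep_vars (\<lambda>_. borel) (\<lambda>i \<omega>. (\<lambda>y. inner (y - yhat) (u j0)) (Y i \<omega>)) UNIV"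
        by (rule indep_vars_compose2[OF Y_indep]) measurable
      then show ?thesis unfolding Z_def by simp
    qed
    have Zsq: "integrable M (\<lambda>\<omega>. (Z i \<omega>)\<^sup>2)" for i unfolding Z_def using intY j0 by simp
    have Zvar: "expectation (\<lambda>\<omega>. (Z i \<omega>)\<^sup>2) = v j0" for i unfolding Z_def by (rule EY)
    have Zmean: "expectation (Z i) = 0" for i
    proof -
      have gm: "(\<lambda>y. inner (y - yhat) (u j0)) \<in> borel_measurable borel" by measurable
      have "expectation (Z i) = expectation (\<lambda>\<omega>. inner (Y 0 \<omega> - yhat) (u j0))"
        unfolding Z_def by (rule ident_transfer(1)[OF Y_meas Y_meas Y_ident gm])
      also have "\<dots> = expectation (\<lambda>\<omega>. inner (Y 0 \<omega>) (u j0) - inner yhat (u j0))"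
        by (simp add: inner_diff_left)
      also have "\<dots> = expectation (\<lambda>\<omega>. inner (Y 0 \<omega>) (u j0)) - expectation (\<lambda>\<omega>. inner yhat (u j0))"
        using Y_int by (intro Bochner_Integration.integral_diff) auto
      also have "\<dots> = 0" using Y_int Y_mean prob_space by simp
      finally show ?thesis .
    qed
    define A where "A n = {\<omega>\<in>space M. real n * (\<bar>a\<bar> / 2) \<le> \<bar>\<Sum>i<n. Z i \<omega>\<bar>}" for n
    have Ameas[measurable]: "A n \<in> sets M" for n unfolding A_def by measurable
    have PA: "measure M (A n) \<le> (v j0 / (\<bar>a\<bar> / 2)\<^sup>2) / real n" if "0 < n" for n
    proof -
      have "measure M (A n) \<le> v j0 / (real n * (\<bar>a\<bar> / 2)\<^sup>2)"
        unfolding A_def using a0 that by (intro cheb_sum[OF Zindep Zmeas Zsq Zmean Zvar]) auto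
      then show ?thesis by (simp add: mult.commute)
    qed
    define T where "T n \<omega> = (\<Sum>j=1..mdp_m eps1 n. (1 / (real n - 1)) * (\<Sum>i<n. (inner (Y i \<omega> - yhat) (u j))\<^sup>2))" for n \<omega>
    have Tmeas[measurable]: "T n \<in> borel_measurable M" for n unfolding T_def by measurable
    have Tint: "integrable M (T n)" for n unfolding T_def using intY by auto
    have ET: "expectation (T n) \<le> 2 * (C_p * Zp)" if "2 \<le> n" for n
    proof -
      have "expectation (T n) = (\<Sum>j=1..mdp_m eps1 n. (1 / (real n - 1)) * (\<Sum>i<n. v j))"
        unfolding T_def using intY EY
        by (subst Bochner_Integration.integral_sum) (auto simp: Bochner_Integration.integral_sum)
      also have "\<dots> = (\<Sum>j=1..mdp_m eps1 n. (real n / (real n - 1)) * v j)" by simp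
      also have "\<dots> \<le> (\<Sum>j=1..mdp_m eps1 n. 2 * v j)"
      proof (intro sum_mono mult_right_mono)
        fix j assume "j \<in> {1..mdp_m eps1 n}"
        then show "0 \<le> v j" using vpos[of j] by simp
        show "real n / (real n - 1) \<le> 2" using that by (simp add: field_simps)
      qed
      also have "\<dots> = 2 * (\<Sum>j=1..mdp_m eps1 n. v j)" by (simp add: sum_distrib_left)
      also have "\<dots> \<le> 2 * (C_p * Zp)" using sumv by simp
      finally show ?thesis .
    qed
    have Tnn: "0 \<le> T n \<omega>" if "2 \<le> n" for n \<omega>
      unfolding T_def using that by (intro sum_nonneg mult_nonneg_nonneg) auto
    have SleT: "S_tot eps1 Y u n \<omega> \<le> T n \<omega>" if "2 \<le> n" for n \<omega>
      unfolding S_tot_def T_def by (intro sum_mono s2_le that)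
    define c0 where "c0 = L0 * a\<^sup>2 / 4"
    have c0pos: "0 < c0" unfolding c0_def using L0pos a0 by simp
    define B where "B n = {\<omega>\<in>space M. c0 \<le> real (mdp_m eps1 n) / real n * T n \<omega>}" for n
    have Bmeas[measurable]: "B n \<in> sets M" for n unfolding B_def by measurable
    have PB: "measure M (B n) \<le> real (mdp_m eps1 n) / real n * (2 * (C_p * Zp) / c0)" if "2 \<le> n" for n
    proof -
      have "measure M (B n) \<le> expectation (\<lambda>\<omega>. real (mdp_m eps1 n) / real n * T n \<omega>) / c0"
        unfolding B_def using Tint Tnn that c0pos
        by (intro integral_Markov_inequality_measure[where A="space M"]) auto
      also have "\<dots> = real (mdp_m eps1 n) / real n * expectation (T n) / c0" by simp
      also have "\<dots> \<le> real (mdp_m eps1 n) / real n * (2 * (C_p * Zp)) / c0"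
        using ET[OF that] c0pos by (intro divide_right_mono mult_left_mono) auto
      finally show ?thesis by simp
    qed
    define Tg where "Tg n = {\<omega> \<in> space M. k \<le> k_stop eps1 eps2 \<sigma> Y u n \<omega>}" for n
    have Tgmeas: "Tg n \<in> sets M" for n unfolding Tg_def by (rule k_stop_set_meas) measurable
    have sub: "space M - (A n \<union> B n) \<subseteq> Tg n" if n2: "2 \<le> n" and mj: "j0 \<le> mdp_m eps1 n" for n
    proof
      fix \<omega> assume \<omega>: "\<omega> \<in> space M - (A n \<union> B n)"
      let ?m = "mdp_m eps1 n"
      define x where "x = inner (Ybar Y n \<omega>) (u j0)"
      have nA: "\<bar>\<Sum>i<n. Z i \<omega>\<bar> < real n * (\<bar>a\<bar> / 2)" using \<omega> unfolding A_def by auto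
      have nB: "real ?m / real n * T n \<omega> < c0" using \<omega> unfolding B_def by auto
      have xa: "x = a + (1 / real n) * (\<Sum>i<n. Z i \<omega>)"
        unfolding x_def a_def Z_def using n2 by (intro inner_Ybar_c) auto
      have "\<bar>x - a\<bar> < \<bar>a\<bar> / 2"
      proof -
        have "\<bar>x - a\<bar> = \<bar>\<Sum>i<n. Z i \<omega>\<bar> / real n" using xa by (simp add: abs_mult)
        also have "\<dots> < \<bar>a\<bar> / 2" using nA n2 by (simp add: divide_less_eq mult.commute)
        finally show ?thesis .
      qed
      then have xabs: "\<bar>a\<bar> / 2 < \<bar>x\<bar>" by linarith
      have x2: "a\<^sup>2 / 4 < x\<^sup>2"
      proof -
        have "(\<bar>a\<bar> / 2)\<^sup>2 < \<bar>x\<bar>\<^sup>2" by (rule power_strict_mono[OF xabs]) auto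
        then show ?thesis by (simp add: power_divide)
      qed
      have dlt: "(delta' eps1 eps2 \<sigma> Y u n \<omega>)\<^sup>2 < c0"
      proof -
        have "(delta' eps1 eps2 \<sigma> Y u n \<omega>)\<^sup>2 \<le> real ?m * S_tot eps1 Y u n \<omega> / real n"
          by (rule delta'_sq_le[OF eps2(1)])
        also have "\<dots> \<le> real ?m * T n \<omega> / real n"
          using SleT[OF n2, of \<omega>] by (intro divide_right_mono mult_left_mono) auto
        also have "\<dots> = real ?m / real n * T n \<omega>" by simp
        also have "\<dots> < c0" by (rule nB)
        finally show ?thesis .
      qed
      have dj0: "L0 \<le> d2 eps1 eps2 \<sigma> Y u j0 n \<omega>"
        unfolding L0_def using j0 mj by (intro d2_ge_Lb sigma_pos) auto
      have c0le: "c0 \<le> d2 eps1 eps2 \<sigma> Y u j0 n \<omega> * x\<^sup>2"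
      proof -
        have "c0 = L0 * (a\<^sup>2 / 4)" unfolding c0_def by simp
        also have "\<dots> \<le> d2 eps1 eps2 \<sigma> Y u j0 n \<omega> * x\<^sup>2"
          using dj0 x2 L0pos by (intro mult_mono) auto
        finally show ?thesis .
      qed
      have d0: "0 \<le> delta' eps1 eps2 \<sigma> Y u n \<omega>" unfolding delta'_def
        by (intro real_sqrt_ge_zero mult_nonneg_nonneg sum_nonneg) (auto simp: s2_nonneg)
      have "k \<le> k_stop eps1 eps2 \<sigma> Y u n \<omega>"
        unfolding k_stop_ge_iff
      proof (intro allI impI notI)
        fix k' assume k': "k' < k"
          "k' \<le> ?m \<and> sqrt (\<Sum>j=k'+1..?m. (dd eps1 eps2 \<sigma> Y u j n \<omega>)\<^sup>2 * (inner (Ybar Y n \<omega>) (u j))\<^sup>2)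
             \<le> delta' eps1 eps2 \<sigma> Y u n \<omega>"
        have j0in: "j0 \<in> {k'+1..?m}" using k'(1) j0 mj by auto
        have "d2 eps1 eps2 \<sigma> Y u j0 n \<omega> * x\<^sup>2 =
              (dd eps1 eps2 \<sigma> Y u j0 n \<omega>)\<^sup>2 * (inner (Ybar Y n \<omega>) (u j0))\<^sup>2"
          unfolding dd_def x_def using d2_nonneg[of eps1 eps2 \<sigma> Y u j0 n \<omega>] by simp
        also have "\<dots> \<le> (\<Sum>j=k'+1..?m. (dd eps1 eps2 \<sigma> Y u j n \<omega>)\<^sup>2 * (inner (Ybar Y n \<omega>) (u j))\<^sup>2)"
          using j0in by (intro member_le_sum) auto
        finally have "(delta' eps1 eps2 \<sigma> Y u n \<omega>)\<^sup>2 <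
            (\<Sum>j=k'+1..?m. (dd eps1 eps2 \<sigma> Y u j n \<omega>)\<^sup>2 * (inner (Ybar Y n \<omega>) (u j))\<^sup>2)"
          using dlt c0le by linarith
        then have "sqrt ((delta' eps1 eps2 \<sigma> Y u n \<omega>)\<^sup>2) <
            sqrt (\<Sum>j=k'+1..?m. (dd eps1 eps2 \<sigma> Y u j n \<omega>)\<^sup>2 * (inner (Ybar Y n \<omega>) (u j))\<^sup>2)"
          by (rule real_sqrt_less_mono)
        then show False using k'(2) d0 by simp
      qed
      then show "\<omega> \<in> Tg n" using \<omega> unfolding Tg_def by auto
    qed
    define lo where "lo n = 1 - (v j0 / (\<bar>a\<bar> / 2)\<^sup>2) / real n
        - real (mdp_m eps1 n) / real n * (2 * (C_p * Zp) / c0)" for n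
    have lo_le: "eventually (\<lambda>n. lo n \<le> measure M (Tg n)) sequentially"
      using eventually_ge_at_top[of 2] m_ev[of j0]
    proof eventually_elim
      case (elim n)
      have "measure M (space M - (A n \<union> B n)) = 1 - measure M (A n \<union> B n)"
        by (rule prob_compl) measurable
      moreover have "measure M (A n \<union> B n) \<le> measure M (A n) + measure M (B n)"
        by (rule measure_Un_le) measurable
      moreover have "measure M (space M - (A n \<union> B n)) \<le> measure M (Tg n)"
        by (rule finite_measure_mono[OF sub[OF elim] Tgmeas])
      moreover have "measure M (A n) \<le> (v j0 / (\<bar>a\<bar> / 2)\<^sup>2) / real n" using elim by (intro PA) auto
      moreover have "measure M (B n) \<le> real (mdp_m eps1 n) / real n * (2 * (C_p * Zp) / c0)"
        using elim by (intro PB) auto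
      ultimately show ?case unfolding lo_def by linarith
    qed
    have lo_lim: "lo \<longlonglongrightarrow> 1"
    proof -
      have "(\<lambda>n. (v j0 / (\<bar>a\<bar> / 2)\<^sup>2) / real n) \<longlonglongrightarrow> 0" by (rule lim_const_over_n)
      moreover have "(\<lambda>n. real (mdp_m eps1 n) / real n * (2 * (C_p * Zp) / c0)) \<longlonglongrightarrow> 0 * (2 * (C_p * Zp) / c0)"
        by (intro tendsto_mult mn_lim tendsto_const)
      ultimately have "lo \<longlonglongrightarrow> 1 - 0 - 0 * (2 * (C_p * Zp) / c0)"
        unfolding lo_def by (intro tendsto_diff tendsto_const)
      then show ?thesis by simp
    qed
    have "(\<lambda>n. measure M (Tg n)) \<longlonglongrightarrow> 1"
      by (rule tendsto_sandwich[OF lo_le _ lo_lim tendsto_const]) (simp add: prob_le_1)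
    then show "(\<lambda>n. measure M {\<omega> \<in> space M. k \<le> k_stop eps1 eps2 \<sigma> Y u n \<omega>}) \<longlonglongrightarrow> 1"
      unfolding Tg_def .
    qed
  qed
  have part2: "\<exists>qn :: nat \<Rightarrow> nat. filterlim qn at_top sequentially \<and>
           (\<lambda>n. measure M {\<omega> \<in> space M. qn n \<le> k_stop eps1 eps2 \<sigma> Y u n \<omega>}) \<longlonglongrightarrow> 1"
    by (rule diag_seq[of "\<lambda>k n. measure M {\<omega> \<in> space M. k \<le> k_stop eps1 eps2 \<sigma> Y u n \<omega>}"])
      (use part1 in auto)
  show ?thesis using part1 part2 by blast
qed

end
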